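(* Let $G$ be a graph and let $G_1,\dots,G_k$ be subgraphs of $G$ such that (i) the edge sets $E(G_1),\dots,E(G_k)$ are mutually disjoint; (ii) for each $i$, every maximal clique of $G_i$ is also a maximal clique of $G$; (iii) for each $i$, any maximal clique of $G$ belonging to $G_i$ and any maximal clique of $G$ not belonging to $G_i$ share at most one vertex. Then $p(G) \ge \sum_{i=1}^k p(G_i)$.
   Context: All graphs are finite and simple. For an acyclic digraph $D$, the phylogeny graph $P(D)$ is the graph on $V(D)$ in which distinct vertices $u,v$ are adjacent if and only if $(u,v)\in A(D)$, or $(v,u)\in A(D)$, or there is a vertex $w$ with $(u,w),(v,w)\in A(D)$. A phylogeny digraph for a graph $G$ is an acyclic digraph $D$ such that $G$ is an induced subgraph of $P(D)$ and $D$ has no arc from a vertex of $V(D)\setminus V(G)$ to a vertex of $V(G)$. The phylogeny number $p(G)$ is the minimum of $|V(D)\setminus V(G)|$ over all phylogeny digraphs $D$ for $G$. A clique of $G$ "belongs to $G_i$" if it is a clique of $G_i$. *)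

theory Defs
  imports Main
begin

definition graph :: "'a set \<Rightarrow> 'a set set \<Rightarrow> bool" where
  "graph V E \<longleftrightarrow> finite V \<and> E \<subseteq> {{u, v} | u v. u \<in> V \<and> v \<in> V \<and> u \<noteq> v}"

definition subgraph :: "'a set \<Rightarrow> 'a set set \<Rightarrow> 'a set \<Rightarrow> 'a set set \<Rightarrow> bool" where
  "subgraph V' E' V E \<longleftrightarrow> graph V' E' \<and> V' \<subseteq> V \<and> E' \<subseteq> E"

definition clique :: "'a set \<Rightarrow> 'a set set \<Rightarrow> 'a set \<Rightarrow> bool" where
  "clique V E C \<longleftrightarrow> C \<subseteq> V \<and> (\<forall>u\<in>C. \<forall>v\<in>C. u \<noteq> v \<longrightarrow> {u, v} \<in> E)"

definition maximal_clique :: "'a set \<Rightarrow> 'a set set \<Rightarrow> 'a set \<Rightarrow> bool" where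
  "maximal_clique V E C \<longleftrightarrow> clique V E C \<and> (\<forall>C'. clique V E C' \<and> C \<subseteq> C' \<longrightarrow> C' = C)"

definition phylo_adj :: "('b \<times> 'b) set \<Rightarrow> 'b \<Rightarrow> 'b \<Rightarrow> bool" where
  "phylo_adj A u v \<longleftrightarrow> u \<noteq> v \<and>
     ((u, v) \<in> A \<or> (v, u) \<in> A \<or> (\<exists>w. (u, w) \<in> A \<and> (v, w) \<in> A))"

text \<open>A phylogeny digraph for G=(V,E) whose vertex set is the (copy Inl of) V together
  with exactly k extra vertices Inr 0, ..., Inr (k-1).\<close>
definition phylo_digraph :: "'a set \<Rightarrow> 'a set set \<Rightarrow> nat \<Rightarrow> ('a + nat) rel \<Rightarrow> bool" where
  "phylo_digraph V E k A \<longleftrightarrow>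
     A \<subseteq> (Inl ` V \<union> Inr ` {..<k}) \<times> (Inl ` V \<union> Inr ` {..<k}) \<and>
     acyclic A \<and>
     (\<forall>u\<in>V. \<forall>v\<in>V. u \<noteq> v \<longrightarrow> ({u, v} \<in> E \<longleftrightarrow> phylo_adj A (Inl u) (Inl v))) \<and>
     (\<forall>x y. (x, y) \<in> A \<and> x \<notin> Inl ` V \<longrightarrow> y \<notin> Inl ` V)"

definition phylogeny_number :: "'a set \<Rightarrow> 'a set set \<Rightarrow> nat" where
  "phylogeny_number V E = (LEAST k. \<exists>A. phylo_digraph V E k A)"

end

theory Submission
  imports Defs
begin
definition Qs :: "('a + nat) rel \<Rightarrow> ('a + nat) \<Rightarrow> 'a set" where
  "Qs A y = {u. (Inl u, y) \<in> A} \<union> {v. y = Inl v}"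

lemma Qs_sub:
  assumes "phylo_digraph V E m A" "y \<in> Inl ` V \<union> Inr ` {..<m}"
  shows "Qs A y \<subseteq> V"
  using assms unfolding phylo_digraph_def Qs_def by blast

lemma Qs_clique:
  assumes "phylo_digraph V E m A" "y \<in> Inl ` V \<union> Inr ` {..<m}"
  shows "clique V E (Qs A y)"
proof -
  have sub: "Qs A y \<subseteq> V" using Qs_sub[OF assms] .
  have adj: "\<And>u v. u\<in>V \<Longrightarrow> v\<in>V \<Longrightarrow> u\<noteq>v \<Longrightarrow> phylo_adj A (Inl u) (Inl v) \<Longrightarrow> {u,v} \<in> E"
    using assms(1) unfolding phylo_digraph_def by blast
  have "\<forall>u\<in>Qs A y. \<forall>v\<in>Qs A y. u \<noteq> v \<longrightarrow> {u,v} \<in> E"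
  proof (intro ballI impI)
    fix u v assume uv: "u \<in> Qs A y" "v \<in> Qs A y" "u \<noteq> v"
    have "phylo_adj A (Inl u) (Inl v)" using uv unfolding phylo_adj_def Qs_def by auto
    then show "{u,v} \<in> E" using adj sub uv by blast
  qed
  then show ?thesis unfolding clique_def using sub by blast
qed

lemma clique_subset: "clique V E M \<Longrightarrow> Q \<subseteq> M \<Longrightarrow> clique V E Q"
  unfolding clique_def by blast

lemma ex_max_clique:
  assumes "finite V" "clique V E C"
  shows "\<exists>M. maximal_clique V E M \<and> C \<subseteq> M"
proof -
  let ?S = "{M. clique V E M \<and> C \<subseteq> M}"
  have fin: "finite ?S"
    by (rule finite_subset[of _ "Pow V"]) (auto simp: clique_def assms(1))
  have ne: "C \<in> ?S" using assms by auto
  have "Max (card ` ?S) \<in> card ` ?S" using fin ne by (intro Max_in) auto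
  then obtain M where M: "M \<in> ?S" "card M = Max (card ` ?S)" by auto
  have mx: "\<And>M'. M' \<in> ?S \<Longrightarrow> card M' \<le> card M" using fin M(2) by simp
  have "maximal_clique V E M"
    unfolding maximal_clique_def
  proof (intro conjI allI impI)
    show "clique V E M" using M by auto
    fix C' assume C': "clique V E C' \<and> M \<subseteq> C'"
    then have "C' \<in> ?S" using M by auto
    then have "card C' \<le> card M" by (rule mx)
    moreover have fC': "finite C'" using C' assms(1) unfolding clique_def by (auto intro: finite_subset)
    ultimately show "C' = M" using C' by (metis card_subset_eq card_mono antisym)
  qed
  then show ?thesis using M by auto
qed

lemma key:
  assumes "finite V" "subgraph V' E' V E"
    "\<forall>C. maximal_clique V' E' C \<longrightarrow> maximal_clique V E C"
    "\<forall>C D. maximal_clique V E C \<and> clique V' E' C \<and> maximal_clique V E D \<and> \<not> clique V' E' D \<longrightarrow> card (C \<inter> D) \<le> 1"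
    "clique V E Q" "u\<in>Q" "v\<in>Q" "u\<noteq>v" "{u,v}\<in>E'"
  shows "clique V' E' Q"
proof -
  have g: "graph V' E'" using assms(2) by (simp add: subgraph_def)
  have fV': "finite V'" using g by (simp add: graph_def)
  have uvV': "u \<in> V'" "v \<in> V'" using g assms(9) unfolding graph_def by (auto simp: doubleton_eq_iff)
  have "clique V' E' {u,v}" unfolding clique_def using uvV' assms(9) by (auto simp: insert_commute)
  then obtain Mi where Mi: "maximal_clique V' E' Mi" "{u,v} \<subseteq> Mi" using ex_max_clique fV' by blast
  have Mi2: "maximal_clique V E Mi" "clique V' E' Mi" using Mi assms(3) by (auto simp: maximal_clique_def)
  obtain M where M: "maximal_clique V E M" "Q \<subseteq> M" using ex_max_clique assms(1,5) by blast
  have "clique V' E' M"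
  proof (rule ccontr)
    assume "\<not> clique V' E' M"
    then have le: "card (Mi \<inter> M) \<le> 1" using assms(4) Mi2 M by blast
    have "finite (Mi \<inter> M)" using Mi2(2) fV' unfolding clique_def by (auto intro: finite_subset)
    moreover have "{u,v} \<subseteq> Mi \<inter> M" using Mi M assms(6,7) by auto
    ultimately have "card {u,v} \<le> card (Mi \<inter> M)" by (rule card_mono)
    then show False using le assms(8) by simp
  qed
  then show ?thesis using M(2) by (rule clique_subset)
qed

lemma acyc_aux:
  fixes A B :: "('a + nat) rel"
  assumes src: "\<And>x y. (x,y)\<in>B \<Longrightarrow> (\<exists>u. x = Inl u)"
    and inl: "\<And>x u. (x, Inl u) \<in> B \<Longrightarrow> (x, Inl u) \<in> A" and ac: "acyclic A"
  shows "acyclic B"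
proof -
  have step: "(x,y)\<in>B\<^sup>+ \<Longrightarrow> (\<exists>u. y = Inl u) \<longrightarrow> (x,y)\<in>A\<^sup>+" for x y
  proof (induction rule: trancl.induct)
    case (r_into_trancl a b) then show ?case using inl by blast
  next
    case (trancl_into_trancl a b c)
    show ?case
    proof
      assume "\<exists>u. c = Inl u"
      then have bc: "(b,c) \<in> A" using inl trancl_into_trancl.hyps(2) by blast
      have "\<exists>u. b = Inl u" using src trancl_into_trancl.hyps(2) by blast
      then have "(a,b) \<in> A\<^sup>+" using trancl_into_trancl.IH by blast
      then show "(a,c) \<in> A\<^sup>+" using bc by (rule Transitive_Closure.trancl_into_trancl)
    qed
  qed
  show ?thesis unfolding acyclic_def
  proof
    fix x show "(x,x) \<notin> B\<^sup>+"
    proof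
      assume xx: "(x,x) \<in> B\<^sup>+"
      then obtain c where "(x,c) \<in> B" by (meson converse_tranclE)
      then have "\<exists>u. x = Inl u" by (rule src)
      then have "(x,x) \<in> A\<^sup>+" using step xx by blast
      then show False using ac by (simp add: acyclic_def)
    qed
  qed
qed

definition Zs :: "'a set \<Rightarrow> 'a set set \<Rightarrow> nat \<Rightarrow> ('a + nat) rel \<Rightarrow> nat set" where
  "Zs V' E' m A = {z\<in>{..<m}. clique V' E' (Qs A (Inr z)) \<and> 2 \<le> card (Qs A (Inr z))}"

lemma sub_digraph:
  fixes A :: "('a + nat) rel"
  assumes pd: "phylo_digraph V E m A"
    and sub: "subgraph V' E' V E"
    and key: "\<And>Q u v. clique V E Q \<Longrightarrow> u\<in>Q \<Longrightarrow> v\<in>Q \<Longrightarrow> u\<noteq>v \<Longrightarrow> {u,v} \<in> E' \<Longrightarrow> clique V' E' Q"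
  shows "\<exists>A'. phylo_digraph V' E' (card (Zs V' E' m A)) A'"
proof -
  define Z where "Z = Zs V' E' m A"
  have finZ: "finite Z" unfolding Z_def Zs_def by auto
  obtain r where r: "bij_betw r Z {0..<card Z}" using ex_bij_betw_finite_nat[OF finZ] by blast
  have rinj: "inj_on r Z" and rZ: "\<And>z. z \<in> Z \<Longrightarrow> r z < card Z"
    using r by (auto simp: bij_betw_def)
  define A' :: "('a + nat) rel" where "A' = {(Inl u, Inl v) | u v. (Inl u, Inl v) \<in> A \<and> v \<in> V' \<and> clique V' E' (Qs A (Inl v))}
     \<union> {(Inl u, Inr (r z)) | u z. (Inl u, Inr z) \<in> A \<and> z \<in> Z}"
  have Adom: "A \<subseteq> (Inl ` V \<union> Inr ` {..<m}) \<times> (Inl ` V \<union> Inr ` {..<m})" and ac: "acyclic A"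
    and adjA: "\<forall>u\<in>V. \<forall>v\<in>V. u \<noteq> v \<longrightarrow> ({u, v} \<in> E \<longleftrightarrow> phylo_adj A (Inl u) (Inl v))"
    using pd unfolding phylo_digraph_def by auto
  have VV: "V' \<subseteq> V" "E' \<subseteq> E" using sub by (auto simp: subgraph_def)
  have fV': "finite V'" using sub by (auto simp: subgraph_def graph_def)
  have inQ: "\<And>u y. (Inl u, y) \<in> A \<Longrightarrow> u \<in> Qs A y" and selfQ: "\<And>v. v \<in> Qs A (Inl v)"
    by (auto simp: Qs_def)
  have cl: "\<And>Q a b. clique V' E' Q \<Longrightarrow> a \<in> Q \<Longrightarrow> b \<in> Q \<Longrightarrow> a \<noteq> b \<Longrightarrow> {a,b} \<in> E'"
    and clV: "\<And>Q a. clique V' E' Q \<Longrightarrow> a \<in> Q \<Longrightarrow> a \<in> V'" by (auto simp: clique_def)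
  have ZQ: "\<And>z. z \<in> Z \<Longrightarrow> clique V' E' (Qs A (Inr z))" by (auto simp: Z_def Zs_def)
  have dom': "\<And>x y. (x,y) \<in> A' \<Longrightarrow> x \<in> Inl ` V' \<and> y \<in> Inl ` V' \<union> Inr ` {..<card Z}"
  proof -
    fix x y assume "(x,y) \<in> A'"
    then show "x \<in> Inl ` V' \<and> y \<in> Inl ` V' \<union> Inr ` {..<card Z}"
      unfolding A'_def using inQ clV ZQ rZ by blast
  qed
  have h1: "\<And>a b. (Inl a, Inl b) \<in> A' \<Longrightarrow> a \<in> Qs A (Inl b) \<and> clique V' E' (Qs A (Inl b))"
    unfolding A'_def using inQ by blast
  have h2: "\<And>a n. (Inl a, Inr n) \<in> A' \<Longrightarrow> \<exists>z\<in>Z. n = r z \<and> a \<in> Qs A (Inr z)"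
    unfolding A'_def using inQ by blast
  have acyc': "acyclic A'"
  proof (rule acyc_aux[OF _ _ ac])
    show "\<And>x y. (x,y) \<in> A' \<Longrightarrow> \<exists>u. x = Inl u" using dom' by blast
    show "\<And>x u. (x, Inl u) \<in> A' \<Longrightarrow> (x, Inl u) \<in> A" unfolding A'_def by blast
  qed
  have adj': "\<forall>u\<in>V'. \<forall>v\<in>V'. u \<noteq> v \<longrightarrow> ({u, v} \<in> E' \<longleftrightarrow> phylo_adj A' (Inl u) (Inl v))"
  proof (intro ballI impI iffI)
    fix u v assume uv: "u \<in> V'" "v \<in> V'" "u \<noteq> v" and pa: "phylo_adj A' (Inl u) (Inl v)"
    have w: "(Inl u, Inl v) \<in> A' \<or> (Inl v, Inl u) \<in> A' \<or> (\<exists>w. (Inl u, w) \<in> A' \<and> (Inl v, w) \<in> A')"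
      using pa by (simp add: phylo_adj_def)
    then show "{u,v} \<in> E'"
    proof (elim disjE exE conjE)
      assume "(Inl u, Inl v) \<in> A'"
      then show ?thesis using h1 selfQ cl uv(3) by blast
    next
      assume "(Inl v, Inl u) \<in> A'"
      then have "{v,u} \<in> E'" using h1 selfQ cl uv(3) by metis
      then show ?thesis by (simp add: insert_commute)
    next
      fix w assume a: "(Inl u, w) \<in> A'" "(Inl v, w) \<in> A'"
      show ?thesis
      proof (cases w)
        case (Inl x) then show ?thesis using a h1 cl uv(3) by blast
      next
        case (Inr n)
        obtain z where z: "z \<in> Z" "n = r z" "u \<in> Qs A (Inr z)" using h2 a Inr by blast
        obtain z' where z': "z' \<in> Z" "n = r z'" "v \<in> Qs A (Inr z')" using h2 a Inr by blast
        have "z = z'" using rinj z z' by (metis inj_on_def)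
        then show ?thesis using z z' ZQ cl uv(3) by blast
      qed
    qed
  next
    fix u v assume uv: "u \<in> V'" "v \<in> V'" "u \<noteq> v" and e: "{u,v} \<in> E'"
    have "phylo_adj A (Inl u) (Inl v)" using adjA uv e VV by blast
    then have w: "(Inl u, Inl v) \<in> A \<or> (Inl v, Inl u) \<in> A \<or> (\<exists>w. (Inl u, w) \<in> A \<and> (Inl v, w) \<in> A)"
      by (simp add: phylo_adj_def)
    then show "phylo_adj A' (Inl u) (Inl v)"
    proof (elim disjE exE conjE)
      assume a: "(Inl u, Inl v) \<in> A"
      have "Inl v \<in> Inl ` V \<union> Inr ` {..<m}" using uv VV by auto
      then have "clique V E (Qs A (Inl v))" by (rule Qs_clique[OF pd])
      then have "clique V' E' (Qs A (Inl v))" using key inQ[OF a] selfQ uv(3) e by blast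
      then have "(Inl u, Inl v) \<in> A'" unfolding A'_def using a uv by blast
      then show ?thesis using uv by (simp add: phylo_adj_def)
    next
      assume a: "(Inl v, Inl u) \<in> A"
      have e2: "{v,u} \<in> E'" using e by (simp add: insert_commute)
      have "Inl u \<in> Inl ` V \<union> Inr ` {..<m}" using uv VV by auto
      then have "clique V E (Qs A (Inl u))" by (rule Qs_clique[OF pd])
      then have "clique V' E' (Qs A (Inl u))" using key inQ[OF a] selfQ uv(3) e2 by blast
      then have "(Inl v, Inl u) \<in> A'" unfolding A'_def using a uv by blast
      then show ?thesis using uv by (simp add: phylo_adj_def)
    next
      fix w assume a: "(Inl u, w) \<in> A" "(Inl v, w) \<in> A"
      have wd: "w \<in> Inl ` V \<union> Inr ` {..<m}" using a Adom by blast
      then have "clique V E (Qs A w)" by (rule Qs_clique[OF pd])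
      then have cq: "clique V' E' (Qs A w)" using key inQ[OF a(1)] inQ[OF a(2)] uv(3) e by blast
      show ?thesis
      proof (cases w)
        case (Inl x)
        have "x \<in> V'" using cq selfQ clV Inl by blast
        then have "(Inl u, w) \<in> A'" "(Inl v, w) \<in> A'" unfolding A'_def using a cq Inl by blast+
        then show ?thesis using uv by (auto simp: phylo_adj_def)
      next
        case (Inr z)
        have zm: "z < m" using wd Inr by auto
        have fq: "finite (Qs A w)" using cq fV' unfolding clique_def by (auto intro: finite_subset)
        have "card {u,v} \<le> card (Qs A w)" using fq inQ[OF a(1)] inQ[OF a(2)] by (intro card_mono) auto
        then have "2 \<le> card (Qs A w)" using uv(3) by simp
        then have "z \<in> Z" unfolding Z_def Zs_def using zm cq Inr by auto
        then have "(Inl u, Inr (r z)) \<in> A'" "(Inl v, Inr (r z)) \<in> A'" unfolding A'_def using a Inr by blast+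
        then show ?thesis using uv by (auto simp: phylo_adj_def)
      qed
    qed
  qed
  have d1: "A' \<subseteq> (Inl ` V' \<union> Inr ` {..<card Z}) \<times> (Inl ` V' \<union> Inr ` {..<card Z})"
  proof
    fix p assume "p \<in> A'" then obtain x y where "p = (x,y)" "(x,y) \<in> A'" by (cases p) auto
    then show "p \<in> (Inl ` V' \<union> Inr ` {..<card Z}) \<times> (Inl ` V' \<union> Inr ` {..<card Z})" using dom'[of x y] by auto
  qed
  have d4: "\<forall>x y. (x, y) \<in> A' \<and> x \<notin> Inl ` V' \<longrightarrow> y \<notin> Inl ` V'" using dom' by blast
  have "phylo_digraph V' E' (card Z) A'"
    unfolding phylo_digraph_def using d1 acyc' adj' d4 by blast
  then show ?thesis unfolding Z_def by blast
qed

lemma exists_pd: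
  assumes g: "graph V E"
  shows "\<exists>m A. phylo_digraph V E m A"
proof -
  have fV: "finite V" using g by (simp add: graph_def)
  have Esub: "E \<subseteq> {{u, v} | u v. u \<in> V \<and> v \<in> V \<and> u \<noteq> v}" using g by (simp add: graph_def)
  have "E \<subseteq> Pow V" using Esub by auto
  then have fE: "finite E" using fV by (meson finite_Pow_iff finite_subset)
  obtain f where f: "bij_betw f {0..<card E} E" using ex_bij_betw_nat_finite[OF fE] by blast
  define A :: "('a + nat) rel" where "A = {(Inl u, Inr n) | u n. n < card E \<and> u \<in> f n}"
  have fE': "\<And>n. n < card E \<Longrightarrow> f n \<in> E" using f by (auto simp: bij_betw_def)
  have surj: "\<And>e. e \<in> E \<Longrightarrow> \<exists>n<card E. f n = e" using f unfolding bij_betw_def by (metis atLeastLessThan_iff imageE zero_le)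
  have dom: "A \<subseteq> (Inl ` V \<union> Inr ` {..<card E}) \<times> (Inl ` V \<union> Inr ` {..<card E})"
    unfolding A_def using fE' Esub by blast
  have ac: "acyclic A"
    by (rule acyc_aux[where A="{}"]) (auto simp: A_def acyclic_def)
  have adj: "\<forall>u\<in>V. \<forall>v\<in>V. u \<noteq> v \<longrightarrow> ({u, v} \<in> E \<longleftrightarrow> phylo_adj A (Inl u) (Inl v))"
  proof (intro ballI impI iffI)
    fix u v assume uv: "u \<in> V" "v \<in> V" "u \<noteq> v" "{u,v} \<in> E"
    then obtain n where "n < card E" "f n = {u,v}" using surj by blast
    then have "(Inl u, Inr n) \<in> A" "(Inl v, Inr n) \<in> A" unfolding A_def by auto
    then show "phylo_adj A (Inl u) (Inl v)" using uv by (auto simp: phylo_adj_def)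
  next
    fix u v assume uv: "u \<in> V" "v \<in> V" "u \<noteq> v" and pa: "phylo_adj A (Inl u) (Inl v)"
    then obtain w where "(Inl u, w) \<in> A" "(Inl v, w) \<in> A" by (auto simp: phylo_adj_def A_def)
    then obtain n where n: "n < card E" "u \<in> f n" "v \<in> f n" by (auto simp: A_def)
    then have "f n \<in> E" using fE' by blast
    then obtain a b where "f n = {a,b}" using Esub by blast
    then have "f n = {u,v}" using n uv(3) by auto
    then show "{u,v} \<in> E" using \<open>f n \<in> E\<close> by simp
  qed
  have "phylo_digraph V E (card E) A"
    unfolding phylo_digraph_def using dom ac adj by (auto simp: A_def)
  then show ?thesis by blast
qed

theorem mainTheorem2:
  fixes V :: "'a set" and E :: "'a set set"
    and Vs :: "nat \<Rightarrow> 'a set" and Es :: "nat \<Rightarrow> 'a set set" and k :: nat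
  assumes "graph V E"
    and "\<forall>i\<in>{1..k}. subgraph (Vs i) (Es i) V E"
    and "\<forall>i\<in>{1..k}. \<forall>j\<in>{1..k}. i \<noteq> j \<longrightarrow> Es i \<inter> Es j = {}"
    and "\<forall>i\<in>{1..k}. \<forall>C. maximal_clique (Vs i) (Es i) C \<longrightarrow> maximal_clique V E C"
    and "\<forall>i\<in>{1..k}. \<forall>C D. maximal_clique V E C \<and> clique (Vs i) (Es i) C \<and>
            maximal_clique V E D \<and> \<not> clique (Vs i) (Es i) D \<longrightarrow> card (C \<inter> D) \<le> 1"
  shows "(\<Sum>i=1..k. phylogeny_number (Vs i) (Es i)) \<le> phylogeny_number V E"
proof -
  define m where "m = phylogeny_number V E"
  obtain m0 A0 where A0: "phylo_digraph V E m0 A0" using exists_pd[OF assms(1)] by blast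
  have "\<exists>A. phylo_digraph V E m A"
    unfolding m_def phylogeny_number_def by (rule LeastI[where P="\<lambda>k. \<exists>A. phylo_digraph V E k A"]) (rule exI, rule A0)
  then obtain A where A: "phylo_digraph V E m A" by blast
  have fV: "finite V" using assms(1) by (simp add: graph_def)
  define Z where "Z i = Zs (Vs i) (Es i) m A" for i
  have le: "phylogeny_number (Vs i) (Es i) \<le> card (Z i)" if i: "i \<in> {1..k}" for i
  proof -
    have "\<exists>A'. phylo_digraph (Vs i) (Es i) (card (Z i)) A'"
      unfolding Z_def
    proof (rule sub_digraph[OF A])
      show "subgraph (Vs i) (Es i) V E" using assms(2) i by blast
      fix Q u v assume q: "clique V E Q" "u\<in>Q" "v\<in>Q" "u\<noteq>v" "{u,v} \<in> Es i"
      have sg: "subgraph (Vs i) (Es i) V E" using assms(2) i by (rule bspec)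
      have mc: "\<forall>C. maximal_clique (Vs i) (Es i) C \<longrightarrow> maximal_clique V E C" using assms(4) i by (rule bspec)
      have sp: "\<forall>C D. maximal_clique V E C \<and> clique (Vs i) (Es i) C \<and>
            maximal_clique V E D \<and> \<not> clique (Vs i) (Es i) D \<longrightarrow> card (C \<inter> D) \<le> 1" using assms(5) i by (rule bspec)
      show "clique (Vs i) (Es i) Q" by (rule key[OF fV sg mc sp q])
    qed
    then show ?thesis unfolding phylogeny_number_def by (intro Least_le) blast
  qed
  have disj: "\<forall>i\<in>{1..k}. \<forall>j\<in>{1..k}. i \<noteq> j \<longrightarrow> Z i \<inter> Z j = {}"
  proof (intro ballI impI)
    fix i j assume ij: "i \<in> {1..k}" "j \<in> {1..k}" "i \<noteq> j"
    show "Z i \<inter> Z j = {}"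
    proof (rule ccontr)
      assume "Z i \<inter> Z j \<noteq> {}"
      then obtain z where zi: "z \<in> Z i" and zj: "z \<in> Z j" by blast
      let ?Q = "Qs A (Inr z)"
      have c2: "2 \<le> card ?Q" using zi by (simp add: Z_def Zs_def)
      then have fq: "finite ?Q" by (metis card.infinite not_numeral_le_zero)
      have "\<not> card ?Q \<le> Suc 0" using c2 by simp
      then obtain a b where ab: "a \<in> ?Q" "b \<in> ?Q" "a \<noteq> b" using card_le_Suc0_iff_eq[OF fq] by blast
      have "{a,b} \<in> Es i" using zi ab by (auto simp: Z_def Zs_def clique_def)
      moreover have "{a,b} \<in> Es j" using zj ab by (auto simp: Z_def Zs_def clique_def)
      ultimately show False using assms(3) ij by blast
    qed
  qed
  have finZ: "\<forall>i\<in>{1..k}. finite (Z i)" by (auto simp: Z_def Zs_def)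
  have "(\<Sum>i=1..k. phylogeny_number (Vs i) (Es i)) \<le> (\<Sum>i=1..k. card (Z i))"
    using le by (intro sum_mono) auto
  also have "\<dots> = card (\<Union>(Z ` {1..k}))" using card_UN_disjoint[OF _ finZ disj] by simp
  also have "\<dots> \<le> card {..<m}" by (rule card_mono) (auto simp: Z_def Zs_def)
  also have "\<dots> = m" by simp
  finally show ?thesis unfolding m_def .
qed

end
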